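(* Let $X$ be a Tychonoff space and $\mathcal A,\mathcal B\subseteq\wp(X)$. The following are equivalent: (i) One has a winning predetermined strategy in $G_1(\mathscr N_{C_{\mathcal A}(X)}(\mathbf 0),\neg\Gamma_{C_{\mathcal B}(X),\mathbf 0})$; (ii) One has a winning predetermined strategy in $G_1(\mathscr N_{C_{\mathcal A}(X)}(\mathbf 0),\neg\Omega_{C_{\mathcal B}(X),\mathbf 0})$; (iii) $\mathrm{cof}(\mathscr N_{C_{\mathcal A}(X)}(\mathbf 0);\mathscr N_{C_{\mathcal B}(X)}(\mathbf 0),\supseteq)=\omega$.
   Context: $C_{\mathcal A}(X)$ is the set of continuous $f:X\to\mathbb R$ with the topology generated by the sets $[f;A,\varepsilon]=\{g:\sup_{x\in A}|f(x)-g(x)|<\varepsilon\}$, $A\in\mathcal A$, $\varepsilon>0$; similarly $C_{\mathcal B}(X)$. $\mathbf 0$ is the zero function; $\mathscr N_Y(y)$ is the set of open neighbourhoods of $y$ in $Y$; $\Omega_{Y,y}=\{S\subseteq Y:y\in\mathrm{cl}_Y(S)\}$; Two's selections $(y_n)$ count as belonging to $\Gamma_{Y,y}$ iff the sequence converges to $y$ in $Y$. In $G_1(\mathcal E,\mathcal C)$, at each inning $n\in\omega$ One plays $E_n\in\mathcal E$ and Two picks $x_n\in E_n$; Two wins iff $\{x_n\}\in\mathcal C$; $\neg\mathcal C$ is the complement of $\mathcal C$. A predetermined strategy for One is a sequence $(E_n)_{n\in\omega}$ of moves; it is winning if One wins whenever Two picks $x_n\in E_n$ for all $n$. $\mathrm{cof}(\mathcal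 E;\mathcal F,\supseteq)$ is the least cardinal $\kappa$ such that there are $\{E_\alpha:\alpha<\kappa\}\subseteq\mathcal E$ with every $F\in\mathcal F$ containing some $E_\alpha$. *)

theory Defs
  imports "HOL-Analysis.Analysis" "HOL-Library.Extended_Real" "HOL-Library.Countable_Set"
begin

definition tychonoff_space :: "'a topology \<Rightarrow> bool" where
  "tychonoff_space X \<longleftrightarrow> completely_regular_space X \<and> Hausdorff_space X"

text \<open>C(X): continuous real functions on X, normalised to 0 outside the carrier
  so that functions are identified with their restriction to topspace X.\<close>
definition Cfun :: "'a topology \<Rightarrow> ('a \<Rightarrow> real) set" where
  "Cfun X = {f. continuous_map X euclideanreal f \<and> (\<forall>x. x \<notin> topspace X \<longrightarrow> f x = 0)}"

definition zero_fun :: "'a \<Rightarrow> real" where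
  "zero_fun = (\<lambda>x. 0)"

definition bracket :: "'a topology \<Rightarrow> ('a \<Rightarrow> real) \<Rightarrow> 'a set \<Rightarrow> real \<Rightarrow> ('a \<Rightarrow> real) set" where
  "bracket X f A \<epsilon> = {g \<in> Cfun X. (SUP x\<in>A. ereal \<bar>f x - g x\<bar>) < ereal \<epsilon>}"

definition CA_top :: "'a topology \<Rightarrow> 'a set set \<Rightarrow> ('a \<Rightarrow> real) topology" where
  "CA_top X \<A> = topology_generated_by
     (insert (Cfun X) {bracket X f A \<epsilon> | f A \<epsilon>. f \<in> Cfun X \<and> A \<in> \<A> \<and> \<epsilon> > 0})"

definition nbhds :: "'b topology \<Rightarrow> 'b \<Rightarrow> 'b set set" where
  "nbhds Y y = {U. openin Y U \<and> y \<in> U}"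

definition Omega_at :: "'b topology \<Rightarrow> 'b \<Rightarrow> 'b set set" where
  "Omega_at Y y = {S. S \<subseteq> topspace Y \<and> y \<in> Y closure_of S}"

definition Gamma_at :: "'b topology \<Rightarrow> 'b \<Rightarrow> (nat \<Rightarrow> 'b) \<Rightarrow> bool" where
  "Gamma_at Y y s \<longleftrightarrow> limitin Y s y sequentially"

text \<open>Game G_1(E, W): One plays E_n in E, Two picks x_n in E_n; Two wins iff W (x_n).\<close>
definition one_predet_wins_G1 :: "'b set set \<Rightarrow> ((nat \<Rightarrow> 'b) \<Rightarrow> bool) \<Rightarrow> bool" where
  "one_predet_wins_G1 \<E> W \<longleftrightarrow>
     (\<exists>E::nat \<Rightarrow> 'b set. (\<forall>n. E n \<in> \<E>) \<and> (\<forall>x. (\<forall>n. x n \<in> E n) \<longrightarrow> \<not> W x))"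

definition cof_le_omega :: "'b set set \<Rightarrow> 'b set set \<Rightarrow> bool" where
  "cof_le_omega \<E> \<F> \<longleftrightarrow> (\<exists>\<C> \<subseteq> \<E>. countable \<C> \<and> (\<forall>F\<in>\<F>. \<exists>E\<in>\<C>. E \<subseteq> F))"

end

theory Submission
  imports Defs
begin

lemma topspace_CA: "topspace (CA_top X S) = Cfun X"
  unfolding CA_top_def topology_generated_by_topspace bracket_def by auto

lemma zero_in_Cfun: "zero_fun \<in> Cfun X"
  unfolding Cfun_def zero_fun_def by auto

lemma generic:
  fixes TA TB :: "'b topology"
  assumes ts: "topspace TA = topspace TB" and z: "z \<in> topspace TA"
  shows "(one_predet_wins_G1 (nbhds TA z) (\<lambda>x. \<not> Gamma_at TB z x)
          \<longleftrightarrow> one_predet_wins_G1 (nbhds TA z) (\<lambda>x. \<not> range x \<in> Omega_at TB z))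
       \<and> (one_predet_wins_G1 (nbhds TA z) (\<lambda>x. \<not> range x \<in> Omega_at TB z)
          \<longleftrightarrow> cof_le_omega (nbhds TA z) (nbhds TB z))"
proof -
  have i_ii: "one_predet_wins_G1 (nbhds TA z) (\<lambda>x. \<not> range x \<in> Omega_at TB z)"
    if "one_predet_wins_G1 (nbhds TA z) (\<lambda>x. \<not> Gamma_at TB z x)"
  proof -
    from that obtain E :: "nat \<Rightarrow> 'b set" where E: "\<forall>n. E n \<in> nbhds TA z"
      and W: "\<forall>x. (\<forall>n. x n \<in> E n) \<longrightarrow> Gamma_at TB z x"
      unfolding one_predet_wins_G1_def by auto
    have "range x \<in> Omega_at TB z" if x: "\<forall>n. x n \<in> E n" for x
    proof -
      have lim: "limitin TB x z sequentially" using W x unfolding Gamma_at_def by auto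
      have sub: "range x \<subseteq> topspace TB"
        proof
        fix y assume "y \<in> range x"
        then obtain n where "y = x n" by auto
        moreover have "openin TA (E n)" using E unfolding nbhds_def by auto
        ultimately show "y \<in> topspace TB" using x ts openin_subset by blast
      qed
      have "z \<in> TB closure_of range x"
        unfolding in_closure_of
      proof (intro conjI allI impI)
        show "z \<in> topspace TB" using z ts by simp
        fix T assume "z \<in> T \<and> openin TB T"
        then have "eventually (\<lambda>n. x n \<in> T) sequentially"
          using lim unfolding limitin_def by auto
        then obtain n where "x n \<in> T" by (meson eventually_sequentially order_refl)
        then show "\<exists>y. y \<in> range x \<and> y \<in> T" by auto
      qed
      then show ?thesis using sub unfolding Omega_at_def by auto
    qed
    then show ?thesis using E unfolding one_predet_wins_G1_def by auto
  qed
  have ii_iii: "cof_le_omega (nbhds TA z) (nbhds TB z)"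
    if "one_predet_wins_G1 (nbhds TA z) (\<lambda>x. \<not> range x \<in> Omega_at TB z)"
  proof -
    have "\<exists>E::nat \<Rightarrow> 'b set. (\<forall>n. E n \<in> nbhds TA z) \<and> (\<forall>x. (\<forall>n. x n \<in> E n) \<longrightarrow> range x \<in> Omega_at TB z)"
      using that unfolding one_predet_wins_G1_def by simp
    then obtain E :: "nat \<Rightarrow> 'b set" where E: "\<forall>n. E n \<in> nbhds TA z"
      and W: "\<forall>x. (\<forall>n. x n \<in> E n) \<longrightarrow> range x \<in> Omega_at TB z"
      by blast
    have "\<exists>n. E n \<subseteq> U" if U: "U \<in> nbhds TB z" for U
    proof (rule ccontr)
      assume "\<not> (\<exists>n. E n \<subseteq> U)"
      then have "\<forall>n. \<exists>y. y \<in> E n \<and> y \<notin> U" by auto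
      then have "\<exists>x. \<forall>n. x n \<in> E n \<and> x n \<notin> U" by (rule choice)
      then obtain x where x: "\<forall>n. x n \<in> E n \<and> x n \<notin> U" by blast
      then have "z \<in> TB closure_of range x" using W unfolding Omega_at_def by auto
      then show False using U x unfolding in_closure_of nbhds_def by auto
    qed
    moreover have "range E \<subseteq> nbhds TA z" using E by auto
    moreover have "countable (range E)" by simp
    ultimately show ?thesis unfolding cof_le_omega_def
      apply (intro exI[of _ "range E"] conjI)
        apply simp
       apply simp
      by (metis rangeI)
  qed
  have iii_i: "one_predet_wins_G1 (nbhds TA z) (\<lambda>x. \<not> Gamma_at TB z x)"
    if "cof_le_omega (nbhds TA z) (nbhds TB z)"
  proof -
    from that obtain C where C: "C \<subseteq> nbhds TA z" "countable C"
      and cov: "\<forall>F\<in>nbhds TB z. \<exists>E\<in>C. E \<subseteq> F"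
      unfolding cof_le_omega_def by auto
    have "topspace TB \<in> nbhds TB z" using z ts unfolding nbhds_def by auto
    then have Cne: "C \<noteq> {}" using cov by auto
    define c where "c = from_nat_into C"
    have rc: "range c = C" unfolding c_def using C(2) Cne by (simp add: range_from_nat_into)
    define E where "E n = \<Inter> (c ` {..n})" for n
    have En: "E n \<in> nbhds TA z" for n
    proof -
      have "\<forall>k. c k \<in> nbhds TA z" using rc C(1) by auto
      then have "\<forall>k. openin TA (c k) \<and> z \<in> c k" unfolding nbhds_def by auto
      then show ?thesis unfolding E_def nbhds_def
        by (auto intro!: openin_Inter)
    qed
    have "Gamma_at TB z x" if x: "\<forall>n. x n \<in> E n" for x
      unfolding Gamma_at_def limitin_def
    proof (intro conjI allI impI)
      show "z \<in> topspace TB" using z ts by simp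
      fix U assume "openin TB U \<and> z \<in> U"
      then obtain D where "D \<in> C" "D \<subseteq> U" using cov unfolding nbhds_def by auto
      then obtain k where k: "c k \<subseteq> U" using rc by auto
      have "\<forall>n\<ge>k. x n \<in> U"
      proof (intro allI impI)
        fix n assume "k \<le> n"
        then have "E n \<subseteq> c k" unfolding E_def by auto
        then show "x n \<in> U" using x k by auto
      qed
      then show "eventually (\<lambda>n. x n \<in> U) sequentially"
        unfolding eventually_sequentially by auto
    qed
    then show ?thesis unfolding one_predet_wins_G1_def using En by auto
  qed
  show ?thesis using i_ii ii_iii iii_i by blast
qed

theorem mainTheorem12:
  fixes X :: "'a topology" and \<A> \<B> :: "'a set set"
  assumes "tychonoff_space X"
    and "\<forall>A\<in>\<A>. A \<subseteq> topspace X" and "\<forall>B\<in>\<B>. B \<subseteq> topspace X"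
  shows "(one_predet_wins_G1 (nbhds (CA_top X \<A>) zero_fun)
            (\<lambda>x. \<not> Gamma_at (CA_top X \<B>) zero_fun x)
          \<longleftrightarrow> one_predet_wins_G1 (nbhds (CA_top X \<A>) zero_fun)
            (\<lambda>x. \<not> range x \<in> Omega_at (CA_top X \<B>) zero_fun))
       \<and> (one_predet_wins_G1 (nbhds (CA_top X \<A>) zero_fun)
            (\<lambda>x. \<not> range x \<in> Omega_at (CA_top X \<B>) zero_fun)
          \<longleftrightarrow> cof_le_omega (nbhds (CA_top X \<A>) zero_fun) (nbhds (CA_top X \<B>) zero_fun))"
  by (rule generic) (simp_all add: topspace_CA zero_in_Cfun)

end
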